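(* Let $\tilde{\mathcal P}$ be a delayed-reward MDP with episodic reward and let $\mathcal P$ be an SDP obtained from $\tilde{\mathcal P}$ by a (possibly higher order Markov) reward redistribution such that $\mathcal P$ is strictly return-equivalent to $\tilde{\mathcal P}$. Fix a policy $\pi$ and assume the reward redistribution is optimal, i.e. $\kappa(T-t-1,t)=0$ for $0\le t\le T-1$. Suppose further that for all $0\le t\le T$ and all histories with positive probability under $\pi$, $$\mathbb E_\pi\left[\sum_{\tau=0}^{T-t-1}R_{t+2+\tau}\mid s_t,a_t\right]=\mathbb E_\pi\left[\sum_{\tau=0}^{T-t-1}R_{t+2+\tau}\mid s_0,a_0,\dots,s_t,a_t\right].$$ Then for all $1\le t\le T$, $$\mathbb E_\pi\left[R_{t+1}\mid s_{t-1},a_{t-1},s_t,a_t\right]=\tilde q^\pi(s_t,a_t)-\tilde q^\pi(s_{t-1},a_{t-1}).$$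
   Context: Setting: finite horizon $T$, discount $\gamma=1$, finite state set $\mathcal S$ and action set $\mathcal A$; states are time-aware. Episodes are $s_0,a_0,R_1,s_1,a_1,R_2,\dots,s_T,a_T,R_{T+1}$. The MDP $\tilde{\mathcal P}$ has Markov transition-reward distribution $p(s_{t+1},\tilde R_{t+1}\mid s_t,a_t)$ and episodic (delayed) reward: $\tilde R_{t+1}=0$ for $t<T$, so the return is $\tilde G_0=\tilde R_{T+1}$. A sequence-Markov decision process (SDP) is a decision process with the same Markov state transition probabilities but whose reward $R_{t+1}$ may depend on the whole history $(s_0,a_0,\dots,s_t,a_t)$ (higher order Markov reward), drawn conditionally on that history and independently of later states and actions; a reward redistribution produces such an SDP $\mathcal P$ with rewards $R_{1},\dots,R_{T+1}$ and return $G_0=\sum_{t=0}^{T}R_{t+1}$. Two SDPs are strictly return-equivalent if for every policy they have the same expected return at $t=0$ and additionally the same expected return for every episode, i.e. $\mathbb E[\tilde G_0\mid s_0,a_0,\dots,s_T,a_T]=\mathbb E[G_0\mid s_0,a_0,\dots,s_T,a_T]$. For a policy $\pi(a\mid s)$, $\mathbb E_\pi[\cdot\mid\ldots]$ is the expectation over episodes generated by $p$ and $\pi$ containing the conditioned state-action pairs at the indicated times. $\tilde q^\pi(s_t,a_t)=\mathbb E_\pi[\sum_{k=0}^{T-t}\tilde R_{t+k+1}\mid s_t,a_t]=\mathbb E_\pi[\tilde R_{T+1}\mid s_t,a_t]$ is the $Q$-function of $\tilde{\mathcal P}$. The expected future rewards are $\kappa(m,t-1)=\mathbb E_\pi\left[\sum_{\tau=0}^{m}R_{t+1+\tau}\mid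 s_{t-1},a_{t-1}\right]$ (redistributed rewards of $\mathcal P$), and a reward redistribution is called optimal if $\kappa(T-t-1,t)=0$ for $0\le t\le T-1$. *)

theory Defs
  imports Complex_Main
begin

text \<open>An episode (or a history prefix) is a list of
  state-action pairs; element k of the list is (s_k, a_k). A full episode
  s_0,a_0,...,s_T,a_T has length T+1; the history up to time t is take (Suc t) e.\<close>

definition is_dist :: "('x::finite \<Rightarrow> real) \<Rightarrow> bool" where
  "is_dist d \<longleftrightarrow> (\<forall>x. 0 \<le> d x) \<and> (\<Sum>x\<in>UNIV. d x) = 1"

definition is_policy :: "('s \<Rightarrow> 'a::finite \<Rightarrow> real) \<Rightarrow> bool" where
  "is_policy \<pi> \<longleftrightarrow> (\<forall>s. is_dist (\<pi> s))"

definition is_kernel :: "('s \<Rightarrow> 'a \<Rightarrow> 's::finite \<Rightarrow> real) \<Rightarrow> bool" where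
  "is_kernel P \<longleftrightarrow> (\<forall>s a. is_dist (P s a))"

definition ep_prob ::
  "('s \<Rightarrow> real) \<Rightarrow> ('s \<Rightarrow> 'a \<Rightarrow> 's \<Rightarrow> real) \<Rightarrow> ('s \<Rightarrow> 'a \<Rightarrow> real) \<Rightarrow> ('s \<times> 'a) list \<Rightarrow> real" where
  "ep_prob p0 P \<pi> e =
     p0 (fst (e ! 0)) * \<pi> (fst (e ! 0)) (snd (e ! 0)) *
     (\<Prod>k<length e - 1. P (fst (e ! k)) (snd (e ! k)) (fst (e ! Suc k)) *
                         \<pi> (fst (e ! Suc k)) (snd (e ! Suc k)))"

definition episodes :: "nat \<Rightarrow> ('s \<times> 'a) list set" where
  "episodes T = {e. length e = Suc T}"

definition ev_prob ::
  "('s \<Rightarrow> real) \<Rightarrow> ('s \<Rightarrow> 'a \<Rightarrow> 's \<Rightarrow> real) \<Rightarrow> ('s \<Rightarrow> 'a \<Rightarrow> real) \<Rightarrow> nat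
    \<Rightarrow> (('s \<times> 'a) list \<Rightarrow> bool) \<Rightarrow> real" where
  "ev_prob p0 P \<pi> T A = (\<Sum>e\<in>{e\<in>episodes T. A e}. ep_prob p0 P \<pi> e)"

definition cond_exp ::
  "('s \<Rightarrow> real) \<Rightarrow> ('s \<Rightarrow> 'a \<Rightarrow> 's \<Rightarrow> real) \<Rightarrow> ('s \<Rightarrow> 'a \<Rightarrow> real) \<Rightarrow> nat
    \<Rightarrow> (('s \<times> 'a) list \<Rightarrow> real) \<Rightarrow> (('s \<times> 'a) list \<Rightarrow> bool) \<Rightarrow> real" where
  "cond_exp p0 P \<pi> T f A =
     (\<Sum>e\<in>{e\<in>episodes T. A e}. ep_prob p0 P \<pi> e * f e) / ev_prob p0 P \<pi> T A"

text \<open>Q-function of the delayed-reward MDP: q~(s_t,a_t) = E_pi[R~_{T+1} | s_t, a_t], where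
  rT s a is the expected episodic reward E[R~_{T+1} | s_T = s, a_T = a].\<close>
definition qtilde ::
  "('s \<Rightarrow> real) \<Rightarrow> ('s \<Rightarrow> 'a \<Rightarrow> 's \<Rightarrow> real) \<Rightarrow> ('s \<Rightarrow> 'a \<Rightarrow> real) \<Rightarrow> nat
    \<Rightarrow> ('s \<Rightarrow> 'a \<Rightarrow> real) \<Rightarrow> nat \<Rightarrow> 's \<Rightarrow> 'a \<Rightarrow> real" where
  "qtilde p0 P \<pi> T rT t s a =
     cond_exp p0 P \<pi> T (\<lambda>e. rT (fst (e ! T)) (snd (e ! T))) (\<lambda>e. e ! t = (s, a))"

text \<open>Redistributed future rewards after time t+1:
  sum_{tau=0}^{T-t-1} R_{t+2+tau}, where r k h = E[R_{k+1} | history h = s_0,a_0,...,s_k,a_k].\<close>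
definition future_rew ::
  "nat \<Rightarrow> (nat \<Rightarrow> ('s \<times> 'a) list \<Rightarrow> real) \<Rightarrow> nat \<Rightarrow> ('s \<times> 'a) list \<Rightarrow> real" where
  "future_rew T r t e = (\<Sum>\<tau><T - t. r (t + 1 + \<tau>) (take (t + 2 + \<tau>) e))"

end

theory Submission
  imports Defs
begin

definition stp :: "('s \<Rightarrow> 'a \<Rightarrow> 's \<Rightarrow> real) \<Rightarrow> ('s \<Rightarrow> 'a \<Rightarrow> real) \<Rightarrow> ('s \<times> 'a) \<Rightarrow> ('s \<times> 'a) \<Rightarrow> real" where
  "stp P \<pi> x y = P (fst x) (snd x) (fst y) * \<pi> (fst y) (snd y)"

fun tr :: "('s \<Rightarrow> 'a \<Rightarrow> 's \<Rightarrow> real) \<Rightarrow> ('s \<Rightarrow> 'a \<Rightarrow> real) \<Rightarrow> ('s \<times> 'a) list \<Rightarrow> real" where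
  "tr P \<pi> (x # y # rest) = stp P \<pi> x y * tr P \<pi> (y # rest)"
| "tr P \<pi> _ = 1"

lemma prod_tr: "(\<Prod>k<length e - 1. P (fst (e ! k)) (snd (e ! k)) (fst (e ! Suc k)) * \<pi> (fst (e ! Suc k)) (snd (e ! Suc k))) = tr P \<pi> e"
proof (induction P \<pi> e rule: tr.induct)
  case (1 P \<pi> x y rest)
  have l: "length (x#y#rest) - 1 = Suc (length (y#rest) - 1)" by simp
  show ?case unfolding l prod.lessThan_Suc_shift using 1 by (simp add: stp_def)
qed auto

lemma ep_prob_tr: "ep_prob p0 P \<pi> e = p0 (fst (e ! 0)) * \<pi> (fst (e ! 0)) (snd (e ! 0)) * tr P \<pi> e"
  unfolding ep_prob_def prod_tr by simp

lemma tr_append: "h \<noteq> [] \<Longrightarrow> tr P \<pi> (h @ v) = tr P \<pi> h * tr P \<pi> (last h # v)"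
proof (induction h rule: induct_list012)
  case (3 x y zs)
  then show ?case by simp
qed auto

lemma ep_prob_append: "h \<noteq> [] \<Longrightarrow> ep_prob p0 P \<pi> (h @ v) = ep_prob p0 P \<pi> h * tr P \<pi> (last h # v)"
  by (simp add: ep_prob_tr tr_append nth_append)

lemma Lsum: "(\<Sum>e\<in>{e::'x list. length e = n + m}. F e) = (\<Sum>h\<in>{h. length h = n}. \<Sum>v\<in>{v. length v = m}. F (h @ v))"
proof -
  have "(\<Sum>p\<in>{h::'x list. length h = n} \<times> {v. length v = m}. F (fst p @ snd p)) = (\<Sum>e\<in>{e::'x list. length e = n + m}. F e)"
    by (rule sum.reindex_bij_witness[where i="\<lambda>e. (take n e, drop n e)" and j="\<lambda>p. fst p @ snd p"]) auto
  then show ?thesis by (simp add: sum.cartesian_product split_def)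
qed

lemma finite_len: "finite {e::('s::finite \<times> 'a::finite) list. length e = n}"
  using finite_lists_length_eq[of "UNIV :: ('s \<times> 'a) set" n] by simp

lemma finite_ep: "finite (episodes T :: ('s::finite \<times> 'a::finite) list set)"
  unfolding episodes_def by (rule finite_len)

lemma drop_last: "length h = Suc t \<Longrightarrow> drop t h = [last h]"
  by (cases h rule: rev_cases) auto

lemma markov_sum:
  fixes p0 :: "'s::finite \<Rightarrow> real" and P :: "'s \<Rightarrow> 'a::finite \<Rightarrow> 's \<Rightarrow> real"
  assumes "t \<le> T"
  shows "(\<Sum>e\<in>episodes T. ep_prob p0 P \<pi> e * (g (take (Suc t) e) * f (drop t e))) =
    (\<Sum>h\<in>{h. length h = Suc t}. ep_prob p0 P \<pi> h * g h *
       (\<Sum>v\<in>{v::('s\<times>'a) list. length v = T - t}. tr P \<pi> (last h # v) * f (last h # v)))"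
proof -
  have e: "episodes T = {e::('s\<times>'a) list. length e = Suc t + (T - t)}" using assms by (auto simp: episodes_def)
  show ?thesis unfolding e Lsum
  proof (rule sum.cong[OF refl])
    fix h :: "('s\<times>'a) list" assume "h \<in> {h. length h = Suc t}"
    then have l: "length h = Suc t" by simp
    then have ne: "h \<noteq> []" by auto
    show "(\<Sum>v\<in>{v. length v = T - t}. ep_prob p0 P \<pi> (h @ v) * (g (take (Suc t) (h @ v)) * f (drop t (h @ v)))) =
      ep_prob p0 P \<pi> h * g h * (\<Sum>v\<in>{v. length v = T - t}. tr P \<pi> (last h # v) * f (last h # v))"
      unfolding sum_distrib_left
      by (rule sum.cong[OF refl]) (simp add: ep_prob_append[OF ne] l drop_last)
  qed
qed

lemma last_nth: "length h = Suc t \<Longrightarrow> last h = h ! t"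
  by (cases h rule: rev_cases) (auto simp: nth_append)

definition Wf :: "('s \<Rightarrow> 'a \<Rightarrow> 's \<Rightarrow> real) \<Rightarrow> ('s \<Rightarrow> 'a \<Rightarrow> real) \<Rightarrow> nat \<Rightarrow> nat \<Rightarrow> (('s \<times> 'a) list \<Rightarrow> real) \<Rightarrow> ('s \<times> 'a) \<Rightarrow> real" where
  "Wf P \<pi> T t f z = (\<Sum>v\<in>{v::('s\<times>'a) list. length v = T - t}. tr P \<pi> (z # v) * f (z # v))"

lemma cond_alt:
  fixes p0 :: "'s::finite \<Rightarrow> real" and P :: "'s \<Rightarrow> 'a::finite \<Rightarrow> 's \<Rightarrow> real"
  shows "cond_exp p0 P \<pi> T F A = (\<Sum>e\<in>episodes T. ep_prob p0 P \<pi> e * (of_bool (A e) * F e)) /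
     (\<Sum>e\<in>episodes T. ep_prob p0 P \<pi> e * (of_bool (A e) * 1))"
  unfolding cond_exp_def ev_prob_def sum.inter_filter[OF finite_ep]
  by (intro arg_cong2[where f="(/)"] sum.cong) auto

lemma ev_alt:
  fixes p0 :: "'s::finite \<Rightarrow> real" and P :: "'s \<Rightarrow> 'a::finite \<Rightarrow> 's \<Rightarrow> real"
  shows "ev_prob p0 P \<pi> T A = (\<Sum>e\<in>episodes T. ep_prob p0 P \<pi> e * (of_bool (A e) * 1))"
  unfolding ev_prob_def sum.inter_filter[OF finite_ep]
  by (intro sum.cong) auto

lemma cond_prefix:
  fixes p0 :: "'s::finite \<Rightarrow> real" and P :: "'s \<Rightarrow> 'a::finite \<Rightarrow> 's \<Rightarrow> real"
  assumes tT: "t \<le> T" and l: "length h0 = Suc t"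
    and ev: "ev_prob p0 P \<pi> T (\<lambda>e. take (Suc t) e = h0) \<noteq> 0"
  shows "cond_exp p0 P \<pi> T (\<lambda>e. f (drop t e)) (\<lambda>e. take (Suc t) e = h0) =
     Wf P \<pi> T t f (last h0) / Wf P \<pi> T t (\<lambda>_. 1) (last h0)"
proof -
  have n: "(\<Sum>e\<in>episodes T. ep_prob p0 P \<pi> e * (of_bool (take (Suc t) e = h0) * g (drop t e)))
      = ep_prob p0 P \<pi> h0 * Wf P \<pi> T t g (last h0)" for g
  proof -
    have "(\<Sum>e\<in>episodes T. ep_prob p0 P \<pi> e * (of_bool (take (Suc t) e = h0) * g (drop t e)))
      = (\<Sum>h\<in>{h. length h = Suc t}. ep_prob p0 P \<pi> h * of_bool (h = h0) * Wf P \<pi> T t g (last h))"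
      using markov_sum[OF tT, of p0 P \<pi> "\<lambda>h. of_bool (h = h0)" g] by (simp add: Wf_def)
    also have "\<dots> = (\<Sum>h\<in>{h. length h = Suc t}. if h = h0 then ep_prob p0 P \<pi> h0 * Wf P \<pi> T t g (last h0) else 0)"
      by (rule sum.cong) auto
    also have "\<dots> = ep_prob p0 P \<pi> h0 * Wf P \<pi> T t g (last h0)"
      by (subst sum.delta[OF finite_len]) (simp add: l)
    finally show ?thesis .
  qed
  have "ev_prob p0 P \<pi> T (\<lambda>e. take (Suc t) e = h0) = ep_prob p0 P \<pi> h0 * Wf P \<pi> T t (\<lambda>_. 1) (last h0)"
    using n[of "\<lambda>_. 1"] ev_alt[of p0 P \<pi> T] by simp
  with ev have "ep_prob p0 P \<pi> h0 \<noteq> 0" by auto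
  then show ?thesis unfolding cond_alt using n[of f] n[of "\<lambda>_. 1"] by simp
qed

lemma cond_state:
  fixes p0 :: "'s::finite \<Rightarrow> real" and P :: "'s \<Rightarrow> 'a::finite \<Rightarrow> 's \<Rightarrow> real"
  assumes tT: "t \<le> T"
    and ev: "ev_prob p0 P \<pi> T (\<lambda>e. e ! t = z) \<noteq> 0"
  shows "cond_exp p0 P \<pi> T (\<lambda>e. f (drop t e)) (\<lambda>e. e ! t = z) =
     Wf P \<pi> T t f z / Wf P \<pi> T t (\<lambda>_. 1) z"
proof -
  define S where "S = (\<Sum>h\<in>{h::('s\<times>'a) list. length h = Suc t}. ep_prob p0 P \<pi> h * of_bool (h ! t = z))"
  have n: "(\<Sum>e\<in>episodes T. ep_prob p0 P \<pi> e * (of_bool (e ! t = z) * g (drop t e)))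
      = S * Wf P \<pi> T t g z" for g
  proof -
    have "(\<Sum>e\<in>episodes T. ep_prob p0 P \<pi> e * (of_bool (e ! t = z) * g (drop t e)))
       = (\<Sum>e\<in>episodes T. ep_prob p0 P \<pi> e * (of_bool (take (Suc t) e ! t = z) * g (drop t e)))"
      using tT by (intro sum.cong) (auto simp: episodes_def)
    also have "\<dots> = (\<Sum>h\<in>{h. length h = Suc t}. ep_prob p0 P \<pi> h * of_bool (h ! t = z) * Wf P \<pi> T t g (last h))"
      using markov_sum[OF tT, of p0 P \<pi> "\<lambda>h. of_bool (h ! t = z)" g] by (simp add: Wf_def)
    also have "\<dots> = (\<Sum>h\<in>{h. length h = Suc t}. ep_prob p0 P \<pi> h * of_bool (h ! t = z) * Wf P \<pi> T t g z)"
      by (rule sum.cong) (auto simp: last_nth)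
    also have "\<dots> = S * Wf P \<pi> T t g z" unfolding S_def sum_distrib_right ..
    finally show ?thesis .
  qed
  have "ev_prob p0 P \<pi> T (\<lambda>e. e ! t = z) = S * Wf P \<pi> T t (\<lambda>_. 1) z"
    using n[of "\<lambda>_. 1"] ev_alt[of p0 P \<pi> T] by simp
  with ev have "S \<noteq> 0" by auto
  then show ?thesis unfolding cond_alt using n[of f] n[of "\<lambda>_. 1"] by simp
qed

lemma ep_nonneg: "is_dist p0 \<Longrightarrow> is_kernel P \<Longrightarrow> is_policy \<pi> \<Longrightarrow> 0 \<le> ep_prob p0 P \<pi> e"
  unfolding ep_prob_def is_dist_def is_kernel_def is_policy_def
  by (intro mult_nonneg_nonneg prod_nonneg) auto

context
  fixes p0 :: "'s::finite \<Rightarrow> real" and P :: "'s \<Rightarrow> 'a::finite \<Rightarrow> 's \<Rightarrow> real" and \<pi> :: "'s \<Rightarrow> 'a \<Rightarrow> real"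
  assumes nn: "\<And>e. 0 \<le> ep_prob p0 P \<pi> e"
begin

lemma ev_ge: "e \<in> episodes T \<Longrightarrow> A e \<Longrightarrow> ep_prob p0 P \<pi> e \<le> ev_prob p0 P \<pi> T A"
  unfolding ev_prob_def
  by (rule member_le_sum) (auto intro: nn finite_subset[OF _ finite_ep])

lemma ev_mono: "(\<And>e. e \<in> episodes T \<Longrightarrow> A e \<Longrightarrow> B e) \<Longrightarrow> ev_prob p0 P \<pi> T A \<le> ev_prob p0 P \<pi> T B"
  unfolding ev_prob_def
  by (rule sum_mono2) (auto intro: nn finite_subset[OF _ finite_ep])

lemma cond_cong_pos:
  assumes "\<And>e. e \<in> episodes T \<Longrightarrow> A e \<Longrightarrow> 0 < ep_prob p0 P \<pi> e \<Longrightarrow> F e = G e"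
  shows "cond_exp p0 P \<pi> T F A = cond_exp p0 P \<pi> T G A"
  unfolding cond_exp_def
proof (intro arg_cong2[where f="(/)"] sum.cong refl)
  fix e assume "e \<in> {e \<in> episodes T. A e}"
  then show "ep_prob p0 P \<pi> e * F e = ep_prob p0 P \<pi> e * G e"
    using assms[of e] nn[of e] by (cases "0 < ep_prob p0 P \<pi> e") auto
qed

end

lemma cond_const: "ev_prob p0 P \<pi> T A \<noteq> 0 \<Longrightarrow> cond_exp p0 P \<pi> T (\<lambda>_. c) A = c"
  unfolding cond_exp_def ev_prob_def by (simp add: sum_distrib_right[symmetric])

lemma cond_add: "ev_prob p0 P \<pi> T A \<noteq> 0 \<Longrightarrow> cond_exp p0 P \<pi> T (\<lambda>e. c + F e) A = c + cond_exp p0 P \<pi> T F A"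
proof -
  assume h: "ev_prob p0 P \<pi> T A \<noteq> 0"
  let ?S = "{e \<in> episodes T. A e}"
  have "(\<Sum>e\<in>?S. ep_prob p0 P \<pi> e * (c + F e)) = c * (\<Sum>e\<in>?S. ep_prob p0 P \<pi> e) + (\<Sum>e\<in>?S. ep_prob p0 P \<pi> e * F e)"
    by (simp add: distrib_left sum.distrib sum_distrib_left mult.commute[of c])
  then show ?thesis using h unfolding cond_exp_def ev_prob_def by (simp add: add_divide_distrib)
qed

lemma sum_split: "(\<Sum>k\<le>t + m. f k) = (\<Sum>k\<le>t. f k) + (\<Sum>\<tau><m. f (Suc t + \<tau>)) "
  by (induction m) (simp_all add: add.assoc)

lemma markov_rT:
  fixes p0 :: "'s::finite \<Rightarrow> real" and P :: "'s \<Rightarrow> 'a::finite \<Rightarrow> 's \<Rightarrow> real"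
  assumes nn: "\<And>e. 0 \<le> ep_prob p0 P \<pi> e"
    and tT: "t \<le> T" and l: "length h = Suc t"
    and ev: "ev_prob p0 P \<pi> T (\<lambda>e. take (Suc t) e = h) > 0"
  shows "cond_exp p0 P \<pi> T (\<lambda>e. rT (fst (e ! T)) (snd (e ! T))) (\<lambda>e. take (Suc t) e = h)
     = qtilde p0 P \<pi> T rT t (fst (h ! t)) (snd (h ! t))"
proof -
  define f where "f u = rT (fst (u ! (T - t))) (snd (u ! (T - t)))" for u :: "('s \<times> 'a) list"
  have fe: "rT (fst (e ! T)) (snd (e ! T)) = f (drop t e)" if "e \<in> episodes T" for e
    using that tT by (simp add: f_def episodes_def)
  have ev2: "ev_prob p0 P \<pi> T (\<lambda>e. e ! t = h ! t) \<noteq> 0"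
  proof -
    have "ev_prob p0 P \<pi> T (\<lambda>e. take (Suc t) e = h) \<le> ev_prob p0 P \<pi> T (\<lambda>e. e ! t = h ! t)"
      by (rule ev_mono[OF nn]) auto
    with ev show ?thesis by auto
  qed
  have "cond_exp p0 P \<pi> T (\<lambda>e. rT (fst (e ! T)) (snd (e ! T))) (\<lambda>e. take (Suc t) e = h)
      = cond_exp p0 P \<pi> T (\<lambda>e. f (drop t e)) (\<lambda>e. take (Suc t) e = h)"
    by (rule cond_cong_pos[OF nn]) (simp add: fe)
  also have "\<dots> = Wf P \<pi> T t f (h ! t) / Wf P \<pi> T t (\<lambda>_. 1) (h ! t)"
    using cond_prefix[OF tT l, of p0 P \<pi> f] ev by (simp add: last_nth[OF l])
  also have "\<dots> = cond_exp p0 P \<pi> T (\<lambda>e. f (drop t e)) (\<lambda>e. e ! t = h ! t)"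
    using cond_state[OF tT ev2, of f] by simp
  also have "\<dots> = cond_exp p0 P \<pi> T (\<lambda>e. rT (fst (e ! T)) (snd (e ! T))) (\<lambda>e. e ! t = h ! t)"
    by (rule cond_cong_pos[OF nn]) (simp add: fe)
  finally show ?thesis by (simp add: qtilde_def)
qed

theorem mainTheorem2:
  fixes p0 :: "'s::finite \<Rightarrow> real"
    and P :: "'s \<Rightarrow> 'a::finite \<Rightarrow> 's \<Rightarrow> real"
    and \<pi> :: "'s \<Rightarrow> 'a \<Rightarrow> real"
    and T :: nat
    and rT :: "'s \<Rightarrow> 'a \<Rightarrow> real"
    and r :: "nat \<Rightarrow> ('s \<times> 'a) list \<Rightarrow> real"
  assumes p0: "is_dist p0"
    and P: "is_kernel P"
    and pol: "is_policy \<pi>"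
    and strict_return_equiv:
      "\<forall>\<pi>'. is_policy \<pi>' \<longrightarrow> (\<forall>e\<in>episodes T. ep_prob p0 P \<pi>' e > 0 \<longrightarrow>
          rT (fst (e ! T)) (snd (e ! T)) = (\<Sum>t\<le>T. r t (take (Suc t) e)))"
    and optimal:
      "\<forall>t<T. \<forall>s a. ev_prob p0 P \<pi> T (\<lambda>e. e ! t = (s, a)) > 0 \<longrightarrow>
          cond_exp p0 P \<pi> T (future_rew T r t) (\<lambda>e. e ! t = (s, a)) = 0"
    and markov_future:
      "\<forall>t\<le>T. \<forall>h. length h = Suc t \<longrightarrow> ev_prob p0 P \<pi> T (\<lambda>e. take (Suc t) e = h) > 0 \<longrightarrow>
          cond_exp p0 P \<pi> T (future_rew T r t) (\<lambda>e. e ! t = h ! t) =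
          cond_exp p0 P \<pi> T (future_rew T r t) (\<lambda>e. take (Suc t) e = h)"
  shows "\<forall>t. 1 \<le> t \<and> t \<le> T \<longrightarrow> (\<forall>x y.
           ev_prob p0 P \<pi> T (\<lambda>e. e ! (t - 1) = x \<and> e ! t = y) > 0 \<longrightarrow>
           cond_exp p0 P \<pi> T (\<lambda>e. r t (take (Suc t) e)) (\<lambda>e. e ! (t - 1) = x \<and> e ! t = y) =
           qtilde p0 P \<pi> T rT t (fst y) (snd y) - qtilde p0 P \<pi> T rT (t - 1) (fst x) (snd x))"
proof (intro allI impI)
  have nn: "\<And>e. 0 \<le> ep_prob p0 P \<pi> e" using ep_nonneg[OF p0 P pol] .
  have hist: "(\<Sum>k\<le>t. r k (take (Suc k) h)) = qtilde p0 P \<pi> T rT t (fst (h ! t)) (snd (h ! t))"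
    if tT: "t \<le> T" and l: "length h = Suc t" and ev: "ev_prob p0 P \<pi> T (\<lambda>e. take (Suc t) e = h) > 0"
    for t h
  proof -
    define C where "C = (\<Sum>k\<le>t. r k (take (Suc k) h))"
    have "cond_exp p0 P \<pi> T (\<lambda>e. rT (fst (e ! T)) (snd (e ! T))) (\<lambda>e. take (Suc t) e = h)
        = cond_exp p0 P \<pi> T (\<lambda>e. C + future_rew T r t e) (\<lambda>e. take (Suc t) e = h)"
    proof (rule cond_cong_pos[OF nn])
      fix e assume e: "e \<in> episodes T" "take (Suc t) e = h" "0 < ep_prob p0 P \<pi> e"
      have "rT (fst (e ! T)) (snd (e ! T)) = (\<Sum>k\<le>T. r k (take (Suc k) e))"
        using strict_return_equiv pol e by blast
      also have "\<dots> = (\<Sum>k\<le>t + (T - t). r k (take (Suc k) e))" using tT by simp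
      also have "\<dots> = (\<Sum>k\<le>t. r k (take (Suc k) e)) + future_rew T r t e"
        unfolding sum_split future_rew_def by simp
      also have "(\<Sum>k\<le>t. r k (take (Suc k) e)) = C"
        unfolding C_def using e(2) by (intro sum.cong) (auto simp: min_def)
      finally show "rT (fst (e ! T)) (snd (e ! T)) = C + future_rew T r t e" .
    qed
    also have "\<dots> = C + cond_exp p0 P \<pi> T (future_rew T r t) (\<lambda>e. take (Suc t) e = h)"
      using ev by (simp add: cond_add)
    also have "cond_exp p0 P \<pi> T (future_rew T r t) (\<lambda>e. take (Suc t) e = h)
        = cond_exp p0 P \<pi> T (future_rew T r t) (\<lambda>e. e ! t = h ! t)"
      using markov_future tT l ev by simp
    also have "\<dots> = 0"
    proof (cases "t < T")
      case True
      have "ev_prob p0 P \<pi> T (\<lambda>e. take (Suc t) e = h) \<le> ev_prob p0 P \<pi> T (\<lambda>e. e ! t = (fst (h ! t), snd (h ! t)))"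
        by (rule ev_mono[OF nn]) auto
      with ev have "ev_prob p0 P \<pi> T (\<lambda>e. e ! t = (fst (h ! t), snd (h ! t))) > 0" by auto
      with optimal True show ?thesis by fastforce
    next
      case False
      with tT have "t = T" by simp
      then show ?thesis by (simp add: future_rew_def cond_exp_def)
    qed
    finally show ?thesis
      using markov_rT[OF nn tT l ev, of rT] C_def by simp
  qed
  fix t x y
  assume t: "1 \<le> t \<and> t \<le> T"
  assume pos: "ev_prob p0 P \<pi> T (\<lambda>e. e ! (t - 1) = x \<and> e ! t = y) > 0"
  obtain t' where t': "t = Suc t'" using t by (cases t) auto
  have "cond_exp p0 P \<pi> T (\<lambda>e. r t (take (Suc t) e)) (\<lambda>e. e ! (t - 1) = x \<and> e ! t = y)
      = cond_exp p0 P \<pi> T (\<lambda>_. qtilde p0 P \<pi> T rT t (fst y) (snd y) - qtilde p0 P \<pi> T rT (t - 1) (fst x) (snd x))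
          (\<lambda>e. e ! (t - 1) = x \<and> e ! t = y)"
  proof (rule cond_cong_pos[OF nn])
    fix e assume e: "e \<in> episodes T" "e ! (t - 1) = x \<and> e ! t = y" "0 < ep_prob p0 P \<pi> e"
    have le: "length e = Suc T" using e(1) by (simp add: episodes_def)
    have evh: "ev_prob p0 P \<pi> T (\<lambda>e'. take (Suc k) e' = take (Suc k) e) > 0" for k
      using ev_ge[OF nn e(1), of "\<lambda>e'. take (Suc k) e' = take (Suc k) e"] e(3) by simp
    have h1: "(\<Sum>k\<le>t. r k (take (Suc k) (take (Suc t) e))) = qtilde p0 P \<pi> T rT t (fst y) (snd y)"
      using hist[of t "take (Suc t) e", OF _ _ evh] t le e(2) by simp
    have h2: "(\<Sum>k\<le>t'. r k (take (Suc k) (take (Suc t') e))) = qtilde p0 P \<pi> T rT t' (fst x) (snd x)"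
      using hist[of t' "take (Suc t') e", OF _ _ evh] t le e(2) t' by simp
    have s1: "(\<Sum>k\<le>t. r k (take (Suc k) (take (Suc t) e))) = (\<Sum>k\<le>t. r k (take (Suc k) e))"
      by (intro sum.cong) (auto simp: min_def)
    have s2: "(\<Sum>k\<le>t'. r k (take (Suc k) (take (Suc t') e))) = (\<Sum>k\<le>t'. r k (take (Suc k) e))"
      by (intro sum.cong) (auto simp: min_def)
    show "r t (take (Suc t) e) = qtilde p0 P \<pi> T rT t (fst y) (snd y) - qtilde p0 P \<pi> T rT (t - 1) (fst x) (snd x)"
      using h1 h2 s1 s2 t' by simp
  qed
  also have "\<dots> = qtilde p0 P \<pi> T rT t (fst y) (snd y) - qtilde p0 P \<pi> T rT (t - 1) (fst x) (snd x)"
    using pos by (intro cond_const) auto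
  finally show "cond_exp p0 P \<pi> T (\<lambda>e. r t (take (Suc t) e)) (\<lambda>e. e ! (t - 1) = x \<and> e ! t = y) =
           qtilde p0 P \<pi> T rT t (fst y) (snd y) - qtilde p0 P \<pi> T rT (t - 1) (fst x) (snd x)" .
qed

end
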